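(* Suppose $0<1/n\ll \nu\ll \tau,\varepsilon<1$ and let $G$ be a digraph on $n$ vertices with $\delta^0(G)\geq n/2$. Then $G$ is $\varepsilon$-extremal or $G$ is a robust $(\nu,\tau)$-outexpander.
   Context: Digraphs have no loops and at most one edge in each direction between two vertices; $\delta^0(G)$ is the minimum over vertices of the minimum of in- and outdegree. For $X,Y\subseteq V(G)$, $E(X,Y)$ is the set of edges $xy$ with $x\in X$, $y\in Y$ and $e(X,Y)=|E(X,Y)|$. For $0<\nu\leq\tau<1$ and $S\subseteq V(G)$, the $\nu$-robust outneighbourhood $RN^+_{\nu,G}(S)$ is the set of vertices of $G$ having at least $\nu n$ inneighbours in $S$; $G$ is a robust $(\nu,\tau)$-outexpander if $|RN^+_{\nu,G}(S)|\geq |S|+\nu n$ for all $S\subseteq V(G)$ with $\tau n<|S|<(1-\tau)n$. $G$ is $\varepsilon$-extremal if there is a partition $A,B,S,T$ of $V(G)$ with sizes $a,b,s,t$ such that $|a-b|,|s-t|\leq 1$ and $e(A\cup S,A\cup T)<\varepsilon n^2$. The hierarchy notation $\alpha\ll\beta$ means the statement holds whenever $\alpha$ is sufficiently small as a function of $\beta$ (constants chosen from right to left); here $1/n\ll\nu\ll \tau,\varepsilon$ means $\nu$ is sufficiently small relative to $\tau$ and $\varepsilon$, and $n$ sufficiently large relative to $\nu$. *)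

theory Defs
  imports Main "HOL.Real"
begin

text \<open>A digraph is a finite vertex set V with an edge relation E \<subseteq> V \<times> V without loops.
  Using a set of ordered pairs gives at most one edge in each direction.\<close>
definition digraph :: "'a set \<Rightarrow> ('a \<times> 'a) set \<Rightarrow> bool" where
  "digraph V E \<longleftrightarrow> finite V \<and> E \<subseteq> V \<times> V \<and> (\<forall>v. (v, v) \<notin> E)"

definition outnbrs :: "('a \<times> 'a) set \<Rightarrow> 'a \<Rightarrow> 'a set" where
  "outnbrs E v = {u. (v, u) \<in> E}"

definition innbrs :: "('a \<times> 'a) set \<Rightarrow> 'a \<Rightarrow> 'a set" where
  "innbrs E v = {u. (u, v) \<in> E}"

definition min_semidegree :: "'a set \<Rightarrow> ('a \<times> 'a) set \<Rightarrow> nat" where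
  "min_semidegree V E = Min ((\<lambda>v. min (card (outnbrs E v)) (card (innbrs E v))) ` V)"

definition edges_between :: "('a \<times> 'a) set \<Rightarrow> 'a set \<Rightarrow> 'a set \<Rightarrow> nat" where
  "edges_between E X Y = card (E \<inter> (X \<times> Y))"

definition robust_outnbhd :: "'a set \<Rightarrow> ('a \<times> 'a) set \<Rightarrow> real \<Rightarrow> 'a set \<Rightarrow> 'a set" where
  "robust_outnbhd V E \<nu> S = {v \<in> V. real (card (innbrs E v \<inter> S)) \<ge> \<nu> * real (card V)}"

definition robust_outexpander :: "'a set \<Rightarrow> ('a \<times> 'a) set \<Rightarrow> real \<Rightarrow> real \<Rightarrow> bool" where
  "robust_outexpander V E \<nu> \<tau> \<longleftrightarrow>
     (\<forall>S. S \<subseteq> V \<longrightarrow> \<tau> * real (card V) < real (card S) \<longrightarrow> real (card S) < (1 - \<tau>) * real (card V) \<longrightarrow>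
        real (card (robust_outnbhd V E \<nu> S)) \<ge> real (card S) + \<nu> * real (card V))"

definition extremal :: "'a set \<Rightarrow> ('a \<times> 'a) set \<Rightarrow> real \<Rightarrow> bool" where
  "extremal V E \<epsilon> \<longleftrightarrow>
     (\<exists>A B S T. A \<union> B \<union> S \<union> T = V \<and>
        A \<inter> B = {} \<and> A \<inter> S = {} \<and> A \<inter> T = {} \<and> B \<inter> S = {} \<and> B \<inter> T = {} \<and> S \<inter> T = {} \<and>
        \<bar>int (card A) - int (card B)\<bar> \<le> 1 \<and> \<bar>int (card S) - int (card T)\<bar> \<le> 1 \<and>
        real (edges_between E (A \<union> S) (A \<union> T)) < \<epsilon> * real (card V) ^ 2)"

end

theory Submission imports Defs begin

lemma e_out:
  assumes "digraph V E" "X \<subseteq> V" "Y \<subseteq> V"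
  shows "edges_between E X Y = (\<Sum>x\<in>X. card (outnbrs E x \<inter> Y))"
proof -
  have fin: "finite V" using assms(1) unfolding digraph_def by auto
  have "E \<inter> (X \<times> Y) = (SIGMA x:X. outnbrs E x \<inter> Y)"
    unfolding outnbrs_def by auto
  moreover have "finite X" using fin assms(2) finite_subset by auto
  moreover have "\<forall>x\<in>X. finite (outnbrs E x \<inter> Y)" using fin assms(3) finite_subset by blast
  ultimately show ?thesis unfolding edges_between_def by simp
qed

lemma e_in:
  assumes "digraph V E" "X \<subseteq> V" "Y \<subseteq> V"
  shows "edges_between E X Y = (\<Sum>y\<in>Y. card (innbrs E y \<inter> X))"
proof -
  have fin: "finite V" using assms(1) unfolding digraph_def by auto
  have "E \<inter> (X \<times> Y) = (\<lambda>(a,b). (b,a)) ` (SIGMA y:Y. innbrs E y \<inter> X)"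
    unfolding innbrs_def by force
  moreover have "inj_on (\<lambda>(a,b). (b,a)) (SIGMA y:Y. innbrs E y \<inter> X)"
    by (auto simp: inj_on_def)
  moreover have "finite Y" using fin assms(3) finite_subset by auto
  moreover have "\<forall>y\<in>Y. finite (innbrs E y \<inter> X)" using fin assms(2) finite_subset by blast
  ultimately show ?thesis unfolding edges_between_def by (simp add: card_image)
qed

lemma adjust:
  assumes "finite V" "X \<subseteq> V" "k \<le> card V"
  obtains X' where "X' \<subseteq> V" "card X' = k" "real (card (X' - X)) \<le> max 0 (real k - real (card X))"
proof (cases "k \<le> card X")
  case True
  then obtain X' where "X' \<subseteq> X" "card X' = k" by (metis obtain_subset_with_card_n)
  moreover have "card (X' - X) = 0" using \<open>X' \<subseteq> X\<close> by (metis Diff_eq_empty_iff card.empty)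
  ultimately show ?thesis using assms(2) by (intro that[of X']) simp_all
next
  case False
  have fx: "finite X" using assms finite_subset by auto
  have "card (V - X) = card V - card X" using assms fx by (simp add: card_Diff_subset)
  then have "k - card X \<le> card (V - X)" using assms by linarith
  then obtain W where W: "W \<subseteq> V - X" "card W = k - card X" "finite W" by (metis obtain_subset_with_card_n)
  have "card (X \<union> W) = card X + card W" using W fx by (subst card_Un_disjoint) auto
  then have "card (X \<union> W) = k" using W False by simp
  moreover have "(X \<union> W) - X = W" using W by auto
  ultimately show ?thesis using that[of "X \<union> W"] W assms False by auto
qed

lemma ebound:
  assumes "digraph V E" "X' \<subseteq> V" "Y' \<subseteq> V"
  shows "edges_between E X' Y' \<le> edges_between E X Y + card (X' - X) * card V + card (Y' - Y) * card V"
proof -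
  have fin: "finite V" using assms(1) unfolding digraph_def by auto
  have EV: "E \<subseteq> V \<times> V" using assms(1) unfolding digraph_def by auto
  have "E \<inter> (X' \<times> Y') \<subseteq> (E \<inter> (X \<times> Y)) \<union> ((X' - X) \<times> V) \<union> (V \<times> (Y' - Y))"
    using EV by auto
  moreover have "finite ((E \<inter> (X \<times> Y)) \<union> ((X' - X) \<times> V) \<union> (V \<times> (Y' - Y)))"
    using fin EV finite_subset[OF _ finite_cartesian_product[OF fin fin]] assms by (auto intro: finite_subset)
  ultimately have "card (E \<inter> (X' \<times> Y')) \<le> card ((E \<inter> (X \<times> Y)) \<union> ((X' - X) \<times> V) \<union> (V \<times> (Y' - Y)))"
    by (rule card_mono[rotated])
  also have "\<dots> \<le> card (E \<inter> (X \<times> Y)) + card ((X' - X) \<times> V) + card (V \<times> (Y' - Y))"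
    by (meson card_Un_le add_le_mono order_trans le_refl)
  also have "\<dots> = card (E \<inter> (X \<times> Y)) + card (X' - X) * card V + card V * card (Y' - Y)"
    by (simp add: card_cartesian_product)
  finally show ?thesis unfolding edges_between_def by (simp add: mult.commute)
qed

lemma part:
  assumes "finite V" "X \<subseteq> V" "Y \<subseteq> V" "card X = card V - card V div 2" "card Y = card V div 2"
    "real (edges_between E X Y) < \<epsilon> * real (card V) ^ 2"
  shows "extremal V E \<epsilon>"
proof -
  define A where "A = X \<inter> Y"
  define S where "S = X - Y"
  define T where "T = Y - X"
  define B where "B = V - (X \<union> Y)"
  have fX: "finite X" "finite Y" using assms finite_subset by auto
  have c1: "card X = card A + card S" unfolding A_def S_def using fX
    by (metis Int_Diff_Un Int_Diff_disjoint card_Un_disjoint finite_Diff finite_Int)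
  have c2: "card Y = card A + card T" unfolding A_def T_def using fX
    by (metis Int_Diff_Un Int_Diff_disjoint card_Un_disjoint finite_Diff finite_Int inf_commute)
  have c3: "card X + card Y = card (X \<union> Y) + card A" unfolding A_def using card_Un_Int fX by blast
  have c4: "card B = card V - card (X \<union> Y)" unfolding B_def using assms by (simp add: card_Diff_subset fX)
  have c5: "card (X \<union> Y) \<le> card V" using assms by (simp add: card_mono)
  have m: "card V = 2 * (card V div 2) + card V mod 2" "card V mod 2 < 2" by auto
  have "card B = card A" using c3 c4 c5 assms(4,5) m by linarith
  moreover have "card T \<le> card S" "card S \<le> card T + 1" using c1 c2 assms(4,5) m by linarith+
  ultimately have ab: "\<bar>int (card A) - int (card B)\<bar> \<le> 1" "\<bar>int (card S) - int (card T)\<bar> \<le> 1"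
    by auto
  have "A \<union> S = X" "A \<union> T = Y" unfolding A_def S_def T_def by auto
  moreover have "A \<union> B \<union> S \<union> T = V" unfolding A_def S_def T_def B_def using assms by auto
  moreover have "A \<inter> B = {} \<and> A \<inter> S = {} \<and> A \<inter> T = {} \<and> B \<inter> S = {} \<and> B \<inter> T = {} \<and> S \<inter> T = {}"
    unfolding A_def S_def T_def B_def by auto
  ultimately show ?thesis unfolding extremal_def using assms(6) ab
    by (intro exI[of _ A] exI[of _ B] exI[of _ S] exI[of _ T]) simp
qed

lemma core:
  assumes G: "digraph V E" and n: "n = card V" "n > 0"
    and deg: "\<forall>v\<in>V. real (card (outnbrs E v)) \<ge> real n / 2 \<and> real (card (innbrs E v)) \<ge> real n / 2"
    and pars: "0 < \<nu>" "0 < \<tau>" "\<nu> \<le> \<tau>"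
    and S: "S \<subseteq> V" "\<tau> * real n < real (card S)" "real (card S) < (1 - \<tau>) * real n"
    and N: "N = robust_outnbhd V E \<nu> S" "real (card N) < real (card S) + \<nu> * real n"
  shows "real (edges_between E S (V - N)) \<le> \<nu> * real n ^ 2"
    "real (card S) \<le> real n / 2 + \<nu> * real n"
    "real (card N) \<ge> real n / 2 - \<nu> * real n / \<tau>"
proof -
  have fin: "finite V" and EV: "E \<subseteq> V \<times> V" using G unfolding digraph_def by auto
  have NV: "N \<subseteq> V" unfolding N robust_outnbhd_def by auto
  define Y where "Y = V - N"
  have YV: "Y \<subseteq> V" unfolding Y_def by auto
  have cY: "card Y = n - card N" unfolding Y_def n using NV fin by (simp add: card_Diff_subset finite_subset)
  have cYle: "card Y \<le> n" using cY by simp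
  have small: "\<And>y. y \<in> Y \<Longrightarrow> real (card (innbrs E y \<inter> S)) < \<nu> * real n"
    unfolding Y_def N robust_outnbhd_def n by auto
  have "real (edges_between E S Y) = (\<Sum>y\<in>Y. real (card (innbrs E y \<inter> S)))"
    using e_in[OF G S(1) YV] by simp
  also have "\<dots> \<le> (\<Sum>y\<in>Y. \<nu> * real n)" by (rule sum_mono) (use small in force)
  also have "\<dots> = real (card Y) * (\<nu> * real n)" by simp
  also have "\<dots> \<le> real n * (\<nu> * real n)" using cYle pars by (intro mult_right_mono) auto
  finally have eY: "real (edges_between E S Y) \<le> \<nu> * real n ^ 2" by (simp add: power2_eq_square mult_ac)
  then show "real (edges_between E S (V - N)) \<le> \<nu> * real n ^ 2" unfolding Y_def .
  have "\<nu> * real n \<le> \<tau> * real n" using pars by (intro mult_right_mono) auto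
  then have "real (card N) < real n" using N(2) S(3) by (simp add: algebra_simps)
  then have "card N < card V" using n by simp
  then have "N \<noteq> V" by auto
  then obtain y where y: "y \<in> Y" using NV unfolding Y_def by auto
  have inV: "innbrs E y \<subseteq> V" using EV unfolding innbrs_def by auto
  have "innbrs E y \<subseteq> (innbrs E y \<inter> S) \<union> (V - S)" using inV by auto
  then have "card (innbrs E y) \<le> card ((innbrs E y \<inter> S) \<union> (V - S))"
    using fin inV by (intro card_mono) (auto intro: finite_subset)
  also have "\<dots> \<le> card (innbrs E y \<inter> S) + card (V - S)" by (rule card_Un_le)
  also have "card (V - S) = n - card S" using S(1) fin n by (simp add: card_Diff_subset finite_subset)
  finally have "real (card (innbrs E y)) \<le> real (card (innbrs E y \<inter> S)) + real (n - card S)" by linarith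
  moreover have "card S \<le> n" using S(1) fin n card_mono by blast
  moreover have "real (card (innbrs E y)) \<ge> real n / 2" using deg y YV by auto
  ultimately show "real (card S) \<le> real n / 2 + \<nu> * real n" using small[OF y] by (simp add: of_nat_diff)
  have outb: "real n / 2 - real (card N) \<le> real (card (outnbrs E x \<inter> Y))" if x: "x \<in> S" for x
  proof -
    have oV: "outnbrs E x \<subseteq> V" using EV unfolding outnbrs_def by auto
    have "outnbrs E x \<subseteq> N \<union> (outnbrs E x \<inter> Y)" using oV unfolding Y_def by auto
    then have "card (outnbrs E x) \<le> card (N \<union> (outnbrs E x \<inter> Y))"
      using fin oV NV by (intro card_mono) (auto intro: finite_subset)
    also have "\<dots> \<le> card N + card (outnbrs E x \<inter> Y)" by (rule card_Un_le)
    finally show ?thesis using deg x S(1) by force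
  qed
  have "real (card S) * (real n / 2 - real (card N)) = (\<Sum>x\<in>S. (real n / 2 - real (card N)))" by simp
  also have "\<dots> \<le> (\<Sum>x\<in>S. real (card (outnbrs E x \<inter> Y)))" by (rule sum_mono) (rule outb)
  also have "\<dots> = real (edges_between E S Y)" using e_out[OF G S(1) YV] by simp
  finally have key: "real (card S) * (real n / 2 - real (card N)) \<le> \<nu> * real n ^ 2" using eY by linarith
  show "real (card N) \<ge> real n / 2 - \<nu> * real n / \<tau>"
  proof (rule ccontr)
    assume "\<not> ?thesis"
    then have d: "real n / 2 - real (card N) > \<nu> * real n / \<tau>" by linarith
    have np: "real n > 0" using n by simp
    have "\<tau> * real n > 0" using np pars by simp
    then have cS: "0 < real (card S)" using S(2) by linarith
    have "\<tau> * real n * (\<nu> * real n / \<tau>) < real (card S) * (real n / 2 - real (card N))"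
      by (rule mult_strict_mono[OF S(2) d]) (use \<open>\<tau> * real n > 0\<close> cS pars np in auto)
    also have "\<tau> * real n * (\<nu> * real n / \<tau>) = \<nu> * real n ^ 2" using pars by (simp add: power2_eq_square field_simps)
    finally show False using key by linarith
  qed
qed

lemma numeric:
  fixes r d1 d2 e \<nu> \<tau> \<epsilon> :: real
  assumes "0 < \<tau>" "0 < \<epsilon>" "\<epsilon> < 1" "0 < \<nu>" "\<nu> \<le> \<epsilon> * \<tau> / 10" "r \<ge> 3 / \<epsilon>"
    "0 \<le> d1" "d1 \<le> 1/2 + \<nu> * r / \<tau> + \<nu> * r" "0 \<le> d2" "d2 \<le> 2 * \<nu> * r"
    "e \<le> \<nu> * r ^ 2 + d1 * r + d2 * r" "\<tau> \<le> 1"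
  shows "e < \<epsilon> * r ^ 2"
proof -
  have r0: "r > 0" using assms(2,6) by (smt (verit) divide_pos_pos)
  have a: "\<nu> / \<tau> \<le> \<epsilon> / 10" using assms(1,5) by (simp add: field_simps)
  have b: "\<nu> \<le> \<epsilon> / 10"
  proof -
    have "\<epsilon> * \<tau> \<le> \<epsilon>" using assms(2,12) by (simp add: mult_left_le)
    then have "\<epsilon> * \<tau> / 10 \<le> \<epsilon> / 10" by simp
    then show ?thesis using assms(5) by linarith
  qed
  have "d1 * r \<le> (1/2 + \<nu> * r / \<tau> + \<nu> * r) * r" using assms r0 by (intro mult_right_mono) auto
  also have "\<dots> = r / 2 + (\<nu> / \<tau>) * r^2 + \<nu> * r^2" by (simp add: field_simps power2_eq_square)
  also have "\<dots> \<le> r / 2 + (\<epsilon> / 10) * r^2 + (\<epsilon> / 10) * r^2"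
    using a b by (intro add_mono mult_right_mono) auto
  finally have c1: "d1 * r \<le> r / 2 + (\<epsilon> / 5) * r^2" by simp
  have "d2 * r \<le> (2 * \<nu> * r) * r" using assms r0 by (intro mult_right_mono) auto
  also have "\<dots> = 2 * \<nu> * r^2" by (simp add: power2_eq_square)
  also have "\<dots> \<le> 2 * (\<epsilon> / 10) * r^2" using b by (intro mult_right_mono) auto
  finally have c2: "d2 * r \<le> (\<epsilon> / 5) * r^2" by simp
  have c3: "\<nu> * r^2 \<le> (\<epsilon> / 10) * r^2" using b by (intro mult_right_mono) auto
  have "\<epsilon> * r \<ge> 3" using assms(2,6) by (simp add: field_simps)
  then have "\<epsilon> * r * r \<ge> 3 * r" using r0 by (intro mult_right_mono) auto
  then have c4: "r / 2 < \<epsilon> * r^2 / 2" using r0 by (simp add: power2_eq_square)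
  show ?thesis using assms(11) c1 c2 c3 c4 by linarith
qed

theorem lemma4p4:
  "\<forall>\<tau> \<epsilon> :: real. 0 < \<tau> \<and> \<tau> < 1 \<and> 0 < \<epsilon> \<and> \<epsilon> < 1 \<longrightarrow>
     (\<exists>\<nu>0 > 0. \<forall>\<nu>. 0 < \<nu> \<and> \<nu> \<le> \<nu>0 \<longrightarrow>
       (\<exists>n0 :: nat. \<forall>(V :: nat set) (E :: (nat \<times> nat) set).
          digraph V E \<and> card V \<ge> n0 \<and> real (min_semidegree V E) \<ge> real (card V) / 2 \<longrightarrow>
          extremal V E \<epsilon> \<or> robust_outexpander V E \<nu> \<tau>))"
proof (intro allI impI)
  fix \<tau> \<epsilon> :: real
  assume te: "0 < \<tau> \<and> \<tau> < 1 \<and> 0 < \<epsilon> \<and> \<epsilon> < 1"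
  show "\<exists>\<nu>0 > 0. \<forall>\<nu>. 0 < \<nu> \<and> \<nu> \<le> \<nu>0 \<longrightarrow>
       (\<exists>n0 :: nat. \<forall>(V :: nat set) (E :: (nat \<times> nat) set).
          digraph V E \<and> card V \<ge> n0 \<and> real (min_semidegree V E) \<ge> real (card V) / 2 \<longrightarrow>
          extremal V E \<epsilon> \<or> robust_outexpander V E \<nu> \<tau>)"
  proof (intro exI[of _ "\<epsilon> * \<tau> / 10"] conjI allI impI)
    show "0 < \<epsilon> * \<tau> / 10" using te by simp
    fix \<nu> :: real
    assume nu: "0 < \<nu> \<and> \<nu> \<le> \<epsilon> * \<tau> / 10"
    have nut: "\<nu> \<le> \<tau>"
    proof -
      have "\<epsilon> * \<tau> / 10 \<le> \<tau>" using te by (simp add: mult_le_cancel_right1)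
      then show ?thesis using nu by linarith
    qed
    show "\<exists>n0 :: nat. \<forall>(V :: nat set) (E :: (nat \<times> nat) set).
          digraph V E \<and> card V \<ge> n0 \<and> real (min_semidegree V E) \<ge> real (card V) / 2 \<longrightarrow>
          extremal V E \<epsilon> \<or> robust_outexpander V E \<nu> \<tau>"
    proof (intro exI[of _ "nat \<lceil>3 / \<epsilon>\<rceil> + 1"] allI impI)
      fix V :: "nat set" and E :: "(nat \<times> nat) set"
      assume H: "digraph V E \<and> nat \<lceil>3 / \<epsilon>\<rceil> + 1 \<le> card V \<and> real (min_semidegree V E) \<ge> real (card V) / 2"
      define n where "n = card V"
      have G: "digraph V E" using H by simp
      have fin: "finite V" using G unfolding digraph_def by auto
      have n0: "n > 0" using H n_def by simp
      have r3: "real n \<ge> 3 / \<epsilon>"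
      proof -
        have "3 / \<epsilon> \<le> real (nat \<lceil>3 / \<epsilon>\<rceil>)" by linarith
        then show ?thesis using H n_def by linarith
      qed
      have deg: "\<forall>v\<in>V. real (card (outnbrs E v)) \<ge> real n / 2 \<and> real (card (innbrs E v)) \<ge> real n / 2"
      proof
        fix v assume v: "v \<in> V"
        have "min_semidegree V E \<le> min (card (outnbrs E v)) (card (innbrs E v))"
          unfolding min_semidegree_def using fin v by (intro Min_le) auto
        then show "real (card (outnbrs E v)) \<ge> real n / 2 \<and> real (card (innbrs E v)) \<ge> real n / 2"
          using H n_def by auto
      qed
      show "extremal V E \<epsilon> \<or> robust_outexpander V E \<nu> \<tau>"
      proof (rule disjCI)
        assume "\<not> robust_outexpander V E \<nu> \<tau>"
        then obtain S where S: "S \<subseteq> V" "\<tau> * real n < real (card S)" "real (card S) < (1 - \<tau>) * real n"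
          "\<not> real (card (robust_outnbhd V E \<nu> S)) \<ge> real (card S) + \<nu> * real n"
          unfolding robust_outexpander_def n_def by auto
        define N where "N = robust_outnbhd V E \<nu> S"
        have Nl: "real (card N) < real (card S) + \<nu> * real n" using S(4) N_def by simp
        have nu0: "0 < \<nu>" and t0: "0 < \<tau>" using nu te by auto
        note C = core[OF G n_def n0 deg nu0 t0 nut S(1-3) N_def Nl]
        have NV: "N \<subseteq> V" unfolding N_def robust_outnbhd_def by auto
        define Y where "Y = V - N"
        have cY: "card Y = n - card N" unfolding Y_def n_def using NV fin by (simp add: card_Diff_subset finite_subset)
        have cNn: "card N \<le> n" unfolding n_def using NV fin card_mono by blast
        have rY: "real (card Y) = real n - real (card N)" using cY cNn by simp
        have k1: "n - n div 2 \<le> card V" "n div 2 \<le> card V" using n_def by auto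
        obtain X' where X': "X' \<subseteq> V" "card X' = n - n div 2"
          "real (card (X' - S)) \<le> max 0 (real (n - n div 2) - real (card S))"
          using adjust[OF fin S(1) k1(1)] by blast
        obtain Y' where Y': "Y' \<subseteq> V" "card Y' = n div 2"
          "real (card (Y' - Y)) \<le> max 0 (real (n div 2) - real (card Y))"
          using adjust[OF fin _ k1(2), of Y] unfolding Y_def by blast
        have eb: "edges_between E X' Y' \<le> edges_between E S Y + card (X' - S) * n + card (Y' - Y) * n"
          using ebound[OF G X'(1) Y'(1)] n_def by simp
        have h1: "real (n - n div 2) \<le> real n / 2 + 1/2" by linarith
        have h2: "real (n div 2) \<le> real n / 2" by linarith
        have p1: "0 \<le> \<nu> * real n / \<tau>" "0 \<le> \<nu> * real n" using te nu by auto
        have "real (n - n div 2) - real (card S) \<le> 1/2 + \<nu> * real n / \<tau> + \<nu> * real n"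
          using h1 C(3) Nl by linarith
        then have "max 0 (real (n - n div 2) - real (card S)) \<le> 1/2 + \<nu> * real n / \<tau> + \<nu> * real n"
          using p1 by simp
        then have d1: "real (card (X' - S)) \<le> 1/2 + \<nu> * real n / \<tau> + \<nu> * real n"
          using X'(3) by linarith
        have "real (n div 2) - real (card Y) \<le> 2 * \<nu> * real n"
          using h2 C(2) Nl rY by linarith
        then have "max 0 (real (n div 2) - real (card Y)) \<le> 2 * \<nu> * real n"
          using p1 by simp
        then have d2: "real (card (Y' - Y)) \<le> 2 * \<nu> * real n"
          using Y'(3) by linarith
        have "real (edges_between E X' Y') \<le> real (edges_between E S Y + card (X' - S) * n + card (Y' - Y) * n)"
          using eb by (rule of_nat_mono)
        then have ebr: "real (edges_between E X' Y') \<le> \<nu> * real n ^ 2 + real (card (X' - S)) * real n + real (card (Y' - Y)) * real n"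
          using C(1) unfolding Y_def by simp
        have "real (edges_between E X' Y') < \<epsilon> * real n ^ 2"
          by (rule numeric[OF _ _ _ _ _ r3 _ d1 _ d2 ebr]) (use te nu in auto)
        then show "extremal V E \<epsilon>"
          using part[OF fin X'(1) Y'(1)] X'(2) Y'(2) n_def by simp
      qed
    qed
  qed
qed

end
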